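(* If $f(z)=z+\sum_{n=2}^\infty a_nz^n\in\mathcal{S}^*_{nc}$, then $$\sum_{n=2}^\infty (n^2k_1-4)|a_n|^2\le 4-k_1,\qquad\text{where } k_1=\cos^2 1.$$
   Context: $\mathbb{D}$ is the open unit disk. $\mathcal{A}$ is the class of analytic $f$ on $\mathbb{D}$ with $f(0)=0$, $f'(0)=1$. For analytic $f,g$ on $\mathbb{D}$, $f\prec g$ means $f=g\circ\omega$ for some analytic $\omega:\mathbb{D}\to\mathbb{D}$ with $\omega(0)=0$. $\mathcal{S}^*_{nc}=\{f\in\mathcal{A}: zf'(z)/f(z)\prec (1+z)/\cos z\}$. *)

theory Defs
  imports "HOL-Analysis.Analysis"
begin

definition unit_disk :: "complex set" where
  "unit_disk = ball 0 1"

definition classA :: "(complex \<Rightarrow> complex) \<Rightarrow> bool" where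
  "classA f \<longleftrightarrow> f holomorphic_on unit_disk \<and> f 0 = 0 \<and> deriv f 0 = 1"

definition subordinate :: "(complex \<Rightarrow> complex) \<Rightarrow> (complex \<Rightarrow> complex) \<Rightarrow> bool" where
  "subordinate f g \<longleftrightarrow>
     (\<exists>w. w holomorphic_on unit_disk \<and> w ` unit_disk \<subseteq> unit_disk \<and> w 0 = 0 \<and>
          (\<forall>z\<in>unit_disk. f z = g (w z)))"

definition starlike_quot :: "(complex \<Rightarrow> complex) \<Rightarrow> complex \<Rightarrow> complex" where
  "starlike_quot f z = (if z = 0 then 1 else z * deriv f z / f z)"

definition S_nc :: "(complex \<Rightarrow> complex) set" where
  "S_nc = {f. classA f \<and> subordinate (starlike_quot f) (\<lambda>z. (1 + z) / cos z)}"

definition taylor_coeff :: "(complex \<Rightarrow> complex) \<Rightarrow> nat \<Rightarrow> complex" where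
  "taylor_coeff f n = (deriv ^^ n) f 0 / of_nat (fact n)"

end

theory Submission
  imports Defs "HOL-Complex_Analysis.Complex_Analysis"
begin


lemma root_sum:
  fixes N n m :: nat
  assumes "n < N" "m < N"
  shows "(\<Sum>k<N. (exp(2*pi*\<i>/N)^n)^k * cnj ((exp(2*pi*\<i>/N)^m)^k)) = (if n = m then of_nat N else 0)"
proof -
  define q where "q = exp (2*pi*\<i>*(of_int (int n - int m))/N)"
  have N0: "N > 0" using assms by auto
  have eq: "(exp(2*pi*\<i>/N)^n)^k * cnj ((exp(2*pi*\<i>/N)^m)^k) = q^k" for k
  proof -
    have "(exp(2*pi*\<i>/N)^n)^k * cnj ((exp(2*pi*\<i>/N)^m)^k)
        = exp (of_nat (n*k) * (2*pi*\<i>/N)) * exp (of_nat (m*k) * (-2*pi*\<i>/N))"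
      by (simp add: exp_of_nat_mult[symmetric] power_mult exp_cnj power_mult_distrib mult_ac)
    also have "\<dots> = exp (of_nat k * (2*pi*\<i>*(of_int (int n - int m))/N))"
      by (simp add: exp_add[symmetric] algebra_simps diff_divide_distrib)
    also have "\<dots> = q^k" by (simp add: q_def exp_of_nat_mult[symmetric] times_divide_eq_right)
    finally show ?thesis .
  qed
  show ?thesis
  proof (cases "n = m")
    case True
    show ?thesis unfolding eq using True by (simp add: q_def)
  next
    case False
    have qN: "q^N = 1"
    proof -
      have "q^N = exp (2*pi*\<i> * of_int (int n - int m))"
        using N0 by (simp add: q_def exp_of_nat_mult[symmetric])
      also have "\<dots> = 1" by (simp add: exp_eq_1) (metis of_int_of_nat_eq of_int_diff)
      finally show ?thesis .
    qed
    have q1: "q \<noteq> 1"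
    proof
      assume "q = 1"
      then obtain j :: int where j: "2*pi*(real_of_int (int n - int m))/N = of_int (2*j) * pi"
        by (auto simp: q_def exp_eq_1)
      hence "pi * (real_of_int (int n - int m) - of_int j * N) = 0" using N0 by (simp add: field_simps)
      hence "real_of_int (int n - int m) = of_int j * N" by simp
      hence "real_of_int (int n - int m) = real_of_int (j * int N)" by simp
      hence "int n - int m = j * int N" by (simp only: of_int_eq_iff)
      moreover have "\<bar>int n - int m\<bar> < int N" using assms by auto
      ultimately have "\<bar>j\<bar> * int N < 1 * int N" by (simp add: abs_mult)
      hence "\<bar>j\<bar> < 1" using N0 by (simp only: mult_less_cancel_right)
      hence "j = 0" by simp
      with \<open>int n - int m = j * int N\<close> False show False by simp
    qed
    show ?thesis unfolding eq using False q1 qN by (simp add: sum_gp_strict)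
  qed
qed

lemma sum3_swap:
  "(\<Sum>k\<in>A. \<Sum>n\<in>B. \<Sum>m\<in>C. f k n m) = (\<Sum>n\<in>B. \<Sum>m\<in>C. \<Sum>k\<in>A. f k n m)"
proof -
  have "(\<Sum>k\<in>A. \<Sum>n\<in>B. \<Sum>m\<in>C. f k n m) = (\<Sum>n\<in>B. \<Sum>k\<in>A. \<Sum>m\<in>C. f k n m)"
    by (rule sum.swap)
  also have "\<dots> = (\<Sum>n\<in>B. \<Sum>m\<in>C. \<Sum>k\<in>A. f k n m)"
    by (rule sum.cong[OF refl], rule sum.swap)
  finally show ?thesis .
qed

lemma poly_parseval:
  fixes c :: "nat \<Rightarrow> complex" and r :: real and N :: nat
  assumes N0: "N > 0"
  shows "(\<Sum>k<N. (norm (\<Sum>n<N. c n * (of_real r * exp(2*pi*\<i>/N)^k)^n))\<^sup>2)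
       = real N * (\<Sum>n<N. (norm (c n))\<^sup>2 * r^(2*n))"
proof -
  define w where "w = exp(2*pi*\<i>/N)"
  define P where "P k = (\<Sum>n<N. c n * (of_real r * w^k)^n)" for k
  have P: "P k = (\<Sum>n<N. (c n * of_real r ^ n) * (w^n)^k)" for k
    unfolding P_def by (simp add: power_mult_distrib power_mult[symmetric] mult.commute mult.left_commute)
  have "complex_of_real (\<Sum>k<N. (norm (P k))\<^sup>2) = (\<Sum>k<N. P k * cnj (P k))"
    by (simp only: of_real_sum complex_norm_square)
  also have "\<dots> = (\<Sum>k<N. \<Sum>n<N. \<Sum>m<N. (c n * of_real r ^ n) * cnj (c m * of_real r ^ m) * ((w^n)^k * cnj ((w^m)^k)))"
    unfolding P cnj_sum sum_product by (simp add: mult_ac)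
  also have "\<dots> = (\<Sum>n<N. \<Sum>m<N. (c n * of_real r ^ n) * cnj (c m * of_real r ^ m) * (\<Sum>k<N. (w^n)^k * cnj ((w^m)^k)))"
    by (subst sum3_swap) (simp only: sum_distrib_left)
  also have "\<dots> = (\<Sum>n<N. \<Sum>m<N. (c n * of_real r ^ n) * cnj (c m * of_real r ^ m) * (if n = m then of_nat N else 0))"
    unfolding w_def by (intro sum.cong refl) (simp only: lessThan_iff root_sum)
  also have "\<dots> = (\<Sum>n<N. (c n * of_real r ^ n) * cnj (c n * of_real r ^ n) * of_nat N)"
    by (simp add: if_distrib cong: if_cong)
  also have "\<dots> = complex_of_real (real N * (\<Sum>n<N. (norm (c n))\<^sup>2 * r^(2*n)))"
  proof -
    have t: "complex_of_real ((norm (c n))\<^sup>2 * r^(2*n)) = (c n * of_real r ^ n) * cnj (c n * of_real r ^ n)" for n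
    proof -
      have "complex_of_real ((norm (c n))\<^sup>2 * r^(2*n)) = (c n * cnj (c n)) * (of_real r ^ n * of_real r ^ n)"
        by (simp only: of_real_mult complex_norm_square) (simp only: mult_2 power_add of_real_mult of_real_power)
      also have "\<dots> = (c n * of_real r ^ n) * cnj (c n * of_real r ^ n)" by (simp add: mult_ac)
      finally show ?thesis .
    qed
    have "complex_of_real (real N * (\<Sum>n<N. (norm (c n))\<^sup>2 * r^(2*n)))
        = of_nat N * (\<Sum>n<N. complex_of_real ((norm (c n))\<^sup>2 * r^(2*n)))" by simp
    also have "\<dots> = of_nat N * (\<Sum>n<N. (c n * of_real r ^ n) * cnj (c n * of_real r ^ n))"
      by (simp only: t)
    also have "\<dots> = (\<Sum>n<N. (c n * of_real r ^ n) * cnj (c n * of_real r ^ n) * of_nat N)"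
      by (simp only: sum_distrib_left mult.commute[of "of_nat N"])
    finally show ?thesis by (rule sym)
  qed
  finally have "(\<Sum>k<N. (norm (P k))\<^sup>2) = real N * (\<Sum>n<N. (norm (c n))\<^sup>2 * r^(2*n))"
    by (simp only: of_real_eq_iff)
  then show ?thesis by (simp add: P_def w_def)
qed


lemma sq_summable:
  fixes x :: "nat \<Rightarrow> real"
  assumes "summable x" "\<And>n. 0 \<le> x n"
  shows "summable (\<lambda>n. (x n)\<^sup>2)"
proof (rule summable_comparison_test_ev[OF _ assms(1)])
  have "eventually (\<lambda>n. x n < 1) sequentially"
    using summable_LIMSEQ_zero[OF assms(1)] by (rule order_tendstoD) simp
  then show "eventually (\<lambda>n. norm ((x n)\<^sup>2) \<le> x n) sequentially"
  proof (rule eventually_mono)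
    fix n assume "x n < 1"
    then show "norm ((x n)\<^sup>2) \<le> x n" using assms(2)[of n]
      by (simp add: power2_eq_square mult_le_cancel_right1 mult_left_le)
  qed
qed

lemma tail_bound:
  fixes c :: "nat \<Rightarrow> complex" and r :: real
  assumes sc: "summable (\<lambda>n. norm (c n) * r^n)" and z: "norm z = r"
  shows "norm ((\<Sum>n. c n * z^n) - (\<Sum>n<N. c n * z^n))
          \<le> (\<Sum>n. norm (c n) * r^n) - (\<Sum>n<N. norm (c n) * r^n)"
proof -
  have nz: "norm (c n * z^n) = norm (c n) * r^n" for n by (simp add: norm_mult norm_power z)
  have s1: "summable (\<lambda>n. norm (c n * z^n))" using sc by (simp only: nz)
  have s2: "summable (\<lambda>n. c n * z^n)" by (rule summable_norm_cancel[OF s1])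
  have "(\<Sum>n. c n * z^n) - (\<Sum>n<N. c n * z^n) = (\<Sum>n. c (n+N) * z^(n+N))"
    by (rule suminf_minus_initial_segment[OF s2, symmetric])
  also have "norm \<dots> \<le> (\<Sum>n. norm (c (n+N) * z^(n+N)))"
    by (rule summable_norm) (simp only: summable_iff_shift[where f="\<lambda>n. norm (c n * z^n)"] s1)
  also have "\<dots> = (\<Sum>n. norm (c (n+N)) * r^(n+N))" by (simp only: nz)
  also have "\<dots> = (\<Sum>n. norm (c n) * r^n) - (\<Sum>n<N. norm (c n) * r^n)"
    by (rule suminf_minus_initial_segment[OF sc])
  finally show ?thesis .
qed

lemma norm_root_pow:
  fixes N k :: nat
  shows   "norm (of_real r * exp(2*pi*\<i>/N)^k) = \<bar>r\<bar>"
  by (simp add: norm_mult norm_power norm_exp_eq_Re)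


lemma parseval_step:
  fixes c d :: "nat \<Rightarrow> complex" and r :: real and N :: nat
  assumes r: "0 < r" and N0: "N > 0"
    and sc: "summable (\<lambda>n. norm (c n) * r^n)" and sd: "summable (\<lambda>n. norm (d n) * r^n)"
    and le: "\<And>z. norm z = r \<Longrightarrow> norm (\<Sum>n. c n * z^n) \<le> norm (\<Sum>n. d n * z^n)"
  shows "sqrt (\<Sum>n<N. (norm (c n))\<^sup>2 * r^(2*n)) \<le> sqrt (\<Sum>n<N. (norm (d n))\<^sup>2 * r^(2*n))
     + (((\<Sum>n. norm (c n) * r^n) - (\<Sum>n<N. norm (c n) * r^n)) + ((\<Sum>n. norm (d n) * r^n) - (\<Sum>n<N. norm (d n) * r^n)))"
proof -
  define T where "T = ((\<Sum>n. norm (c n) * r^n) - (\<Sum>n<N. norm (c n) * r^n)) + ((\<Sum>n. norm (d n) * r^n) - (\<Sum>n<N. norm (d n) * r^n))"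
  define z where "z k = of_real r * exp(2*pi*\<i>/N)^k" for k
  define a where "a k = norm (\<Sum>n<N. c n * (z k)^n)" for k
  define b where "b k = norm (\<Sum>n<N. d n * (z k)^n)" for k
  have nz: "norm (z k) = r" for k using r norm_root_pow[of r N k] unfolding z_def by simp
  have ab: "a k \<le> b k + T" for k
  proof -
    have 1: "a k \<le> norm (\<Sum>n. c n * (z k)^n) + ((\<Sum>n. norm (c n) * r^n) - (\<Sum>n<N. norm (c n) * r^n))"
    proof -
      have "norm (\<Sum>n<N. c n * (z k)^n) \<le> norm (\<Sum>n. c n * (z k)^n) + norm ((\<Sum>n. c n * (z k)^n) - (\<Sum>n<N. c n * (z k)^n))"
        using norm_triangle_ineq4[of "\<Sum>n. c n * (z k)^n" "(\<Sum>n. c n * (z k)^n) - (\<Sum>n<N. c n * (z k)^n)"] by simp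
      then show ?thesis using tail_bound[OF sc nz[of k], of N] unfolding a_def by linarith
    qed
    have 2: "norm (\<Sum>n. d n * (z k)^n) \<le> b k + ((\<Sum>n. norm (d n) * r^n) - (\<Sum>n<N. norm (d n) * r^n))"
    proof -
      have "norm (\<Sum>n. d n * (z k)^n) \<le> norm (\<Sum>n<N. d n * (z k)^n) + norm ((\<Sum>n. d n * (z k)^n) - (\<Sum>n<N. d n * (z k)^n))"
        using norm_triangle_ineq[of "\<Sum>n<N. d n * (z k)^n" "(\<Sum>n. d n * (z k)^n) - (\<Sum>n<N. d n * (z k)^n)"] by simp
      then show ?thesis using tail_bound[OF sd nz[of k], of N] unfolding b_def by linarith
    qed
    show ?thesis using 1 2 le[OF nz[of k]] unfolding T_def by linarith
  qed
  have "L2_set a {..<N} \<le> L2_set (\<lambda>k. b k + T) {..<N}"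
    by (rule L2_set_mono, rule ab, simp add: a_def)
  also have "\<dots> \<le> L2_set b {..<N} + L2_set (\<lambda>k. T) {..<N}"
    by (rule L2_set_triangle_ineq)
  finally have L: "L2_set a {..<N} \<le> L2_set b {..<N} + sqrt (real N) * \<bar>T\<bar>"
    by (simp add: L2_set_constant)
  have La: "L2_set a {..<N} = sqrt (real N) * sqrt (\<Sum>n<N. (norm (c n))\<^sup>2 * r^(2*n))"
    unfolding L2_set_def a_def z_def using poly_parseval[OF N0, of c r] by (simp add: real_sqrt_mult)
  have Lb: "L2_set b {..<N} = sqrt (real N) * sqrt (\<Sum>n<N. (norm (d n))\<^sup>2 * r^(2*n))"
    unfolding L2_set_def b_def z_def using poly_parseval[OF N0, of d r] by (simp add: real_sqrt_mult)
  have T0: "T \<ge> 0" unfolding T_def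
    using order_trans[OF norm_ge_zero tail_bound[OF sc nz[of 0], of N]] order_trans[OF norm_ge_zero tail_bound[OF sd nz[of 0], of N]]
    by linarith
  have "sqrt (real N) * sqrt (\<Sum>n<N. (norm (c n))\<^sup>2 * r^(2*n))
      \<le> sqrt (real N) * (sqrt (\<Sum>n<N. (norm (d n))\<^sup>2 * r^(2*n)) + T)"
    using L La Lb T0 by (simp add: algebra_simps)
  then show ?thesis using N0 unfolding T_def by (simp add: mult_le_cancel_left_pos)
qed


lemma parseval_ineq:
  fixes c d :: "nat \<Rightarrow> complex" and r :: real
  assumes r: "0 < r"
    and sc: "summable (\<lambda>n. norm (c n) * r^n)" and sd: "summable (\<lambda>n. norm (d n) * r^n)"
    and le: "\<And>z. norm z = r \<Longrightarrow> norm (\<Sum>n. c n * z^n) \<le> norm (\<Sum>n. d n * z^n)"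
  shows "summable (\<lambda>n. (norm (c n))\<^sup>2 * r^(2*n))" "summable (\<lambda>n. (norm (d n))\<^sup>2 * r^(2*n))"
    "(\<Sum>n. (norm (c n))\<^sup>2 * r^(2*n)) \<le> (\<Sum>n. (norm (d n))\<^sup>2 * r^(2*n))"
proof -
  have eqc: "(norm (c n))\<^sup>2 * r^(2*n) = (norm (c n) * r^n)\<^sup>2" for n
    by (simp add: power_mult_distrib power_mult mult.commute)
  have eqd: "(norm (d n))\<^sup>2 * r^(2*n) = (norm (d n) * r^n)\<^sup>2" for n
    by (simp add: power_mult_distrib power_mult mult.commute)
  show s1: "summable (\<lambda>n. (norm (c n))\<^sup>2 * r^(2*n))"
    unfolding eqc by (rule sq_summable[OF sc]) (use r in simp)
  show s2: "summable (\<lambda>n. (norm (d n))\<^sup>2 * r^(2*n))"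
    unfolding eqd by (rule sq_summable[OF sd]) (use r in simp)
  let ?Sc = "\<lambda>N. sqrt (\<Sum>n<N. (norm (c n))\<^sup>2 * r^(2*n))"
  let ?R = "\<lambda>N. sqrt (\<Sum>n<N. (norm (d n))\<^sup>2 * r^(2*n))
     + (((\<Sum>n. norm (c n) * r^n) - (\<Sum>n<N. norm (c n) * r^n)) + ((\<Sum>n. norm (d n) * r^n) - (\<Sum>n<N. norm (d n) * r^n)))"
  have l1: "?Sc \<longlonglongrightarrow> sqrt (\<Sum>n. (norm (c n))\<^sup>2 * r^(2*n))"
    by (intro tendsto_real_sqrt summable_LIMSEQ s1)
  have l2: "?R \<longlonglongrightarrow> sqrt (\<Sum>n. (norm (d n))\<^sup>2 * r^(2*n)) + (((\<Sum>n. norm (c n) * r^n) - (\<Sum>n. norm (c n) * r^n)) + ((\<Sum>n. norm (d n) * r^n) - (\<Sum>n. norm (d n) * r^n)))"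
    by (intro tendsto_intros tendsto_real_sqrt summable_LIMSEQ s2 sc sd)
  have "sqrt (\<Sum>n. (norm (c n))\<^sup>2 * r^(2*n)) \<le> sqrt (\<Sum>n. (norm (d n))\<^sup>2 * r^(2*n)) + (((\<Sum>n. norm (c n) * r^n) - (\<Sum>n. norm (c n) * r^n)) + ((\<Sum>n. norm (d n) * r^n) - (\<Sum>n. norm (d n) * r^n)))"
    by (rule LIMSEQ_le[OF l1 l2], rule exI[of _ 1], intro allI impI parseval_step[OF r _ sc sd le]) auto
  then show "(\<Sum>n. (norm (c n))\<^sup>2 * r^(2*n)) \<le> (\<Sum>n. (norm (d n))\<^sup>2 * r^(2*n))"
    by simp
qed



lemma cos1_gt_half: "cos (1::real) > 1/2"
proof -
  have "cos (1::real) > cos (pi/3)"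
    using pi_gt3 by (intro cos_monotone_0_pi) auto
  then show ?thesis by (simp add: cos_60)
qed

lemma norm_cos_ge:
  fixes w :: complex
  assumes "norm w < 1"
  shows "cos 1 \<le> norm (cos w)"
proof -
  have re: "\<bar>Re w\<bar> < 1" using abs_Re_le_cmod[of w] assms by linarith
  have c1: "cos 1 \<le> cos (Re w)"
  proof -
    have "cos 1 \<le> cos \<bar>Re w\<bar>"
      using re pi_gt3 by (intro cos_monotone_0_pi_le) auto
    then show ?thesis by simp
  qed
  have "cos (Re w) ^ 2 \<le> norm (cos w) ^ 2" by (simp add: norm_cos_squared)
  moreover have "0 \<le> cos (1::real)" using cos1_gt_half by simp
  ultimately have "(cos 1)^2 \<le> norm (cos w) ^ 2" using c1
    by (meson order_trans power_mono)
  then show ?thesis by (rule power2_le_imp_le) simp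
qed


lemma pointwise:
  assumes f: "f \<in> S_nc" and z: "z \<in> unit_disk"
  shows "cos 1 * norm (z * deriv f z) \<le> 2 * norm (f z)"
proof (cases "z = 0")
  case True
  then show ?thesis using f by (simp add: S_nc_def classA_def)
next
  case False
  from f obtain w where w: "w ` unit_disk \<subseteq> unit_disk"
    and eq: "\<And>z. z \<in> unit_disk \<Longrightarrow> starlike_quot f z = (1 + w z) / cos (w z)"
    by (auto simp: S_nc_def subordinate_def)
  have "w z \<in> unit_disk" using w z by blast
  then have wz: "norm (w z) < 1" by (simp add: unit_disk_def)
  have c: "cos 1 \<le> norm (cos (w z))" by (rule norm_cos_ge[OF wz])
  have c0: "cos (w z) \<noteq> 0" using c cos1_gt_half by auto
  have w1: "1 + w z \<noteq> 0"
  proof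
    assume "1 + w z = 0"
    then have "w z = -1" by (simp add: add_eq_0_iff)
    with wz show False by simp
  qed
  have q: "z * deriv f z / f z = (1 + w z) / cos (w z)"
    using eq[OF z] False by (simp add: starlike_quot_def)
  have fz: "f z \<noteq> 0"
  proof
    assume "f z = 0"
    with q have "(1 + w z) / cos (w z) = 0" by simp
    with c0 w1 show False by simp
  qed
  have "z * deriv f z = f z * (1 + w z) / cos (w z)"
    using q fz by (simp add: field_simps)
  then have "norm (z * deriv f z) * norm (cos (w z)) = norm (f z) * norm (1 + w z)"
    using c0 by (simp add: norm_mult norm_divide)
  also have "\<dots> \<le> norm (f z) * 2"
  proof (rule mult_left_mono)
    show "norm (1 + w z) \<le> 2" using norm_triangle_ineq[of 1 "w z"] wz by simp
  qed simp
  finally have A: "norm (z * deriv f z) * norm (cos (w z)) \<le> norm (f z) * 2" .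
  have "cos 1 * norm (z * deriv f z) \<le> norm (cos (w z)) * norm (z * deriv f z)"
    using c by (intro mult_right_mono) auto
  then show ?thesis using A by (simp add: mult.commute)
qed

lemma f_series:
  assumes f: "f \<in> S_nc" and z: "z \<in> unit_disk"
  shows "(\<lambda>n. taylor_coeff f n * z^n) sums f z"
proof -
  have h: "f holomorphic_on ball 0 1" using f by (simp add: S_nc_def classA_def unit_disk_def)
  show ?thesis using holomorphic_power_series[OF h, of z] z
    by (simp add: unit_disk_def taylor_coeff_def)
qed

lemma cancel_helper: "(a::complex) \<noteq> 0 \<Longrightarrow> a * (D / (a * F)) = D / F"
  by (cases "F = 0") (simp_all add: field_simps)

lemma df_series:
  assumes f: "f \<in> S_nc" and z: "z \<in> unit_disk"
  shows "(\<lambda>n. (of_nat n * taylor_coeff f n) * z^n) sums (z * deriv f z)"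
proof -
  have h: "f holomorphic_on ball 0 1" using f by (simp add: S_nc_def classA_def unit_disk_def)
  have h': "deriv f holomorphic_on ball 0 1" by (rule holomorphic_deriv[OF h]) simp
  have s: "(\<lambda>n. (deriv ^^ n) (deriv f) 0 / fact n * z^n) sums deriv f z"
    using holomorphic_power_series[OF h', of z] z by (simp add: unit_disk_def)
  have co: "(deriv ^^ n) (deriv f) 0 / fact n = of_nat (Suc n) * taylor_coeff f (Suc n)" for n
  proof -
    have e1: "(deriv ^^ n) (deriv f) = (deriv ^^ Suc n) f" by (simp only: funpow_Suc_right o_apply)
    have "of_nat (Suc n) * taylor_coeff f (Suc n) = of_nat (Suc n) * ((deriv ^^ Suc n) f 0 / (of_nat (Suc n) * fact n))"
      by (simp only: taylor_coeff_def fact_Suc of_nat_mult of_nat_fact of_nat_id)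
    also have "\<dots> = (deriv ^^ Suc n) f 0 / (fact n :: complex)"
      by (rule cancel_helper) (simp only: of_nat_eq_0_iff nat.distinct(2) not_False_eq_True)
    finally have X: "of_nat (Suc n) * taylor_coeff f (Suc n) = (deriv ^^ Suc n) f 0 / (fact n :: complex)" .
    show ?thesis by (simp only: e1 X)
  qed
  have "(\<lambda>n. z * ((of_nat (Suc n) * taylor_coeff f (Suc n)) * z^n)) sums (z * deriv f z)"
    using sums_mult[OF s, of z] by (simp only: co)
  then have "(\<lambda>n. (of_nat (Suc n) * taylor_coeff f (Suc n)) * z^(Suc n)) sums (z * deriv f z)"
    by (simp add: mult_ac)
  then have "(\<lambda>n. (\<lambda>n. (of_nat n * taylor_coeff f n) * z^n) (Suc n)) sums (z * deriv f z)"
    by (simp only:)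
  then have "(\<lambda>n. (of_nat n * taylor_coeff f n) * z^n) sums (z * deriv f z + (of_nat 0 * taylor_coeff f 0) * z^0)"
    by (rule sums_Suc_iff[where f="\<lambda>n. (of_nat n * taylor_coeff f n) * z^n", THEN iffD1])
  then show ?thesis by simp
qed


theorem mainTheorem3:
  fixes f :: "complex \<Rightarrow> complex"
  assumes "f \<in> S_nc"
  defines "k1 \<equiv> (cos (1::real))\<^sup>2"
  shows "summable (\<lambda>m. (real ((m+2)^2) * k1 - 4) * (norm (taylor_coeff f (m+2)))\<^sup>2)
         \<and> (\<Sum>m. (real ((m+2)^2) * k1 - 4) * (norm (taylor_coeff f (m+2)))\<^sup>2) \<le> 4 - k1"
proof -
  note f = assms(1)
  define a where "a = taylor_coeff f"
  have chalf: "cos (1::real) > 1/2" by (rule cos1_gt_half)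
  have k1q: "k1 > 1/4"
  proof -
    have "(1/2::real)^2 < (cos 1)^2" using chalf by (intro power_strict_mono) auto
    then show ?thesis unfolding k1_def by (simp add: power2_eq_square)
  qed
  have k1le: "k1 \<le> 1" unfolding k1_def using abs_cos_le_one[of 1] by (simp add: abs_square_le_1)
  have a0: "a 0 = 0" using f by (simp add: a_def taylor_coeff_def S_nc_def classA_def)
  have a1: "a 1 = 1" using f by (simp add: a_def taylor_coeff_def S_nc_def classA_def)
  define t where "t m = (real ((m+2)^2) * k1 - 4) * (norm (a (m+2)))\<^sup>2" for m
  have tnn: "t m \<ge> 0" if "m \<ge> 2" for m
  proof -
    have "real ((m+2)^2) \<ge> 16"
    proof -
      have "(m+2)^2 \<ge> (4::nat)^2" using that by (intro power_mono) auto
      then have "(16::nat) \<le> (m+2)^2" by simp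
      then have "real 16 \<le> real ((m+2)^2)" by (simp only: of_nat_le_iff)
      then show ?thesis by (simp only: of_nat_numeral)
    qed
    then have "real ((m+2)^2) * k1 \<ge> 16 * (1/4)" using k1q
      by (intro mult_mono) auto
    then show ?thesis unfolding t_def by simp
  qed
  have key: "summable (\<lambda>m. t m * r^(2*(m+2))) \<and> (\<Sum>m. t m * r^(2*(m+2))) \<le> 4 - k1"
    if r0: "0 < r" and r1: "r < 1" for r
  proof -
    define R where "R = (1 + r) / 2"
    have R: "r < R" "R < 1" using r1 by (auto simp: R_def)
    have Rd: "complex_of_real R \<in> unit_disk" using R r0 by (simp add: unit_disk_def)
    have sa: "summable (\<lambda>n. norm (a n) * r^n)"
    proof -
      have "summable (\<lambda>n. norm (a n * (complex_of_real r)^n))"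
        unfolding a_def by (rule powser_insidea[OF sums_summable[OF f_series[OF f Rd]]]) (use R r0 in simp)
      then show ?thesis using r0 by (simp add: norm_mult norm_power a_def)
    qed
    have sna: "summable (\<lambda>n. norm (of_nat n * a n) * r^n)"
    proof -
      have "summable (\<lambda>n. norm ((of_nat n * a n) * (complex_of_real r)^n))"
        unfolding a_def by (rule powser_insidea[OF sums_summable[OF df_series[OF f Rd]]]) (use R r0 in simp)
      then show ?thesis using r0 by (simp only: norm_mult norm_power norm_of_real abs_of_pos)
    qed
    define c where "c n = complex_of_real (cos 1) * (of_nat n * a n)" for n
    define d where "d n = 2 * a n" for n
    have sc: "summable (\<lambda>n. norm (c n) * r^n)"
    proof -
      have "summable (\<lambda>n. cos 1 * (norm (of_nat n * a n) * r^n))" by (rule summable_mult[OF sna])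
      moreover have "norm (c n) * r^n = cos 1 * (norm (of_nat n * a n) * r^n)" for n
        using chalf by (simp add: c_def norm_mult)
      ultimately show ?thesis by (simp only:)
    qed
    have sd: "summable (\<lambda>n. norm (d n) * r^n)"
    proof -
      have "summable (\<lambda>n. 2 * (norm (a n) * r^n))" by (rule summable_mult[OF sa])
      moreover have "norm (d n) * r^n = 2 * (norm (a n) * r^n)" for n
        by (simp add: d_def norm_mult)
      ultimately show ?thesis by (simp only:)
    qed
    have le: "norm (\<Sum>n. c n * z^n) \<le> norm (\<Sum>n. d n * z^n)" if z: "norm z = r" for z
    proof -
      have zd: "z \<in> unit_disk" using z r1 by (simp add: unit_disk_def)
      have "(\<lambda>n. complex_of_real (cos 1) * ((of_nat n * a n) * z^n)) sums (complex_of_real (cos 1) * (z * deriv f z))"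
        by (rule sums_mult) (use df_series[OF f zd] in \<open>simp add: a_def\<close>)
      then have e1: "(\<Sum>n. c n * z^n) = complex_of_real (cos 1) * (z * deriv f z)"
        by (simp add: c_def mult.assoc sums_iff)
      have "(\<lambda>n. 2 * (a n * z^n)) sums (2 * f z)"
        by (rule sums_mult) (use f_series[OF f zd] in \<open>simp add: a_def\<close>)
      then have e2: "(\<Sum>n. d n * z^n) = 2 * f z"
        by (simp add: d_def mult.assoc sums_iff)
      show ?thesis unfolding e1 e2 using pointwise[OF f zd] chalf
        by (simp add: norm_mult)
    qed
    note P = parseval_ineq[OF r0 sc sd le]
    define g where "g n = (norm (c n))\<^sup>2 * r^(2*n) - (norm (d n))\<^sup>2 * r^(2*n)" for n
    have sg: "summable g" unfolding g_def by (intro summable_diff P(1) P(2))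
    have g0: "suminf g \<le> 0"
    proof -
      have "suminf g = (\<Sum>n. (norm (c n))\<^sup>2 * r^(2*n)) - (\<Sum>n. (norm (d n))\<^sup>2 * r^(2*n))"
        unfolding g_def by (rule suminf_diff[OF P(1) P(2), symmetric])
      then show ?thesis using P(3) by simp
    qed
    have gt: "g (m+2) = t m * r^(2*(m+2))" for m
    proof -
      have cp: "0 < cos (1::real)" using chalf by simp
      have "norm (c (m+2)) = cos 1 * (real (m+2) * norm (a (m+2)))"
        using cp by (simp only: c_def norm_mult norm_of_real norm_of_nat abs_of_pos)
      then have "(norm (c (m+2)))\<^sup>2 = (cos 1)^2 * real ((m+2)^2) * (norm (a (m+2)))\<^sup>2"
        by (simp only: power_mult_distrib of_nat_power mult.assoc)
      moreover have "(norm (d (m+2)))\<^sup>2 = 4 * (norm (a (m+2)))\<^sup>2"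
        by (simp add: d_def norm_mult power_mult_distrib)
      ultimately show ?thesis unfolding g_def t_def k1_def by (simp add: algebra_simps)
    qed
    have g0v: "g 0 = 0" by (simp add: g_def c_def d_def a0)
    have g1v: "g 1 = (k1 - 4) * r^2"
      using a1 by (simp add: g_def c_def d_def k1_def norm_mult power_mult_distrib algebra_simps power2_eq_square)
    have "(\<Sum>m. g (m+2)) = suminf g - (\<Sum>i<2. g i)" by (rule suminf_minus_initial_segment[OF sg])
    also have "(\<Sum>i<2. g i) = g 0 + g 1" by (simp add: numeral_2_eq_2)
    also have "g 0 + g 1 = (k1 - 4) * r^2" by (simp only: g0v g1v add_0_left)
    finally have sh: "(\<Sum>m. g (m+2)) = suminf g - (k1 - 4) * r^2" .
    have "(4 - k1) * r^2 \<le> (4 - k1) * 1"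
      using k1le r0 r1 by (intro mult_left_mono) (auto simp: power_le_one)
    then have "(\<Sum>m. g (m+2)) \<le> 4 - k1" using sh g0 by (simp add: algebra_simps)
    moreover have "summable (\<lambda>m. g (m+2))" using sg by (simp only: summable_iff_shift)
    ultimately show ?thesis by (simp only: gt simp_thms)
  qed
  have part: "(\<Sum>m<M. t m) \<le> 4 - k1" for M
  proof (cases "M \<ge> 2")
    case False
    then have "M = 0 \<or> M = 1" by auto
    moreover have "t 0 \<le> 0" unfolding t_def using k1le
      by (intro mult_nonpos_nonneg) auto
    ultimately show ?thesis using k1le by auto
  next
    case True
    define rr where "rr j = 1 - inverse (real (Suc j)) / 2" for j
    have rr: "0 < rr j" "rr j < 1" for j
    proof -
      have "inverse (real (Suc j)) \<le> 1" by (simp add: inverse_le_1_iff)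
      moreover have "inverse (real (Suc j)) > 0" by simp
      ultimately show "0 < rr j" "rr j < 1" by (auto simp: rr_def)
    qed
    have lim_rr: "rr \<longlonglongrightarrow> 1"
    proof -
      have "(\<lambda>j. 1 - inverse (real (Suc j)) / 2) \<longlonglongrightarrow> 1 - 0 / 2"
        by (intro tendsto_intros LIMSEQ_inverse_real_of_nat) simp
      moreover have "rr = (\<lambda>j. 1 - inverse (real (Suc j)) / 2)" by (rule ext) (simp only: rr_def)
      ultimately show ?thesis by simp
    qed
    have "(\<lambda>j. \<Sum>m<M. t m * rr j ^ (2*(m+2))) \<longlonglongrightarrow> (\<Sum>m<M. t m * 1 ^ (2*(m+2)))"
      by (intro tendsto_intros lim_rr)
    then have L: "(\<lambda>j. \<Sum>m<M. t m * rr j ^ (2*(m+2))) \<longlonglongrightarrow> (\<Sum>m<M. t m)" by simp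
    have B: "(\<Sum>m<M. t m * rr j ^ (2*(m+2))) \<le> 4 - k1" for j
    proof -
      from key[OF rr(1)[of j] rr(2)[of j]] have s: "summable (\<lambda>m. t m * rr j ^ (2*(m+2)))"
        and b: "(\<Sum>m. t m * rr j ^ (2*(m+2))) \<le> 4 - k1" by auto
      have "(\<Sum>m<M. t m * rr j ^ (2*(m+2))) \<le> (\<Sum>m. t m * rr j ^ (2*(m+2)))"
      proof (rule sum_le_suminf[OF s])
        show "0 \<le> t m * rr j ^ (2 * (m + 2))" if "m \<in> - {..<M}" for m
          using True tnn[of m] rr(1)[of j] that by auto
      qed simp
      then show ?thesis using b by linarith
    qed
    show ?thesis by (rule LIMSEQ_le_const2[OF L]) (use B in auto)
  qed
  have tsum: "summable t"
  proof -
    have "summable (\<lambda>k. t (k+2))"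
    proof (rule bounded_imp_summable)
      show "0 \<le> t (k+2)" for k by (rule tnn) simp
      show "(\<Sum>k\<le>n. t (k+2)) \<le> 4 - k1 - t 0 - t 1" for n
      proof -
        have "(\<Sum>m<Suc (Suc (Suc n)). t m) = t 0 + (t 1 + (\<Sum>k<Suc n. t (Suc (Suc k))))"
          by (simp only: sum.lessThan_Suc_shift) (simp add: numeral_2_eq_2)
        then have "(\<Sum>k\<le>n. t (k+2)) = (\<Sum>m<Suc (Suc (Suc n)). t m) - t 0 - t 1"
          by (simp add: lessThan_Suc_atMost[symmetric] numeral_2_eq_2)
        then show ?thesis using part[of "Suc (Suc (Suc n))"] by linarith
      qed
    qed
    then show ?thesis by (simp only: summable_iff_shift)
  qed
  have "suminf t \<le> 4 - k1" by (rule suminf_le_const[OF tsum part])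
  moreover have teq: "t = (\<lambda>m. (real ((m+2)^2) * k1 - 4) * (norm (taylor_coeff f (m+2)))\<^sup>2)"
    by (rule ext) (simp only: t_def a_def)
  ultimately show ?thesis using tsum unfolding teq by blast
qed

end
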